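(* Let $m=(m_\lambda)_{\lambda\in\Lambda}$ be a formal tuple with $m_\lambda=G_0^\lambda+YG_1^\lambda$, where $G_0^\lambda,G_1^\lambda\in K[[s_\lambda]]$ for $\lambda\in\Lambda_0$ and $G_0^\infty,G_1^\infty\in s_\infty K[[s_\infty]]$, and suppose that for every $\lambda\in\Lambda$ $$\partial_tG_0^\lambda=0,\qquad \partial_tG_1^\lambda+\phi_\lambda(h)\,G_1^\lambda=\sum_{\lambda'\in\Lambda}\phi_\lambda\Big(\Pr_{\lambda'}\big(\phi_{\lambda'}(h)G_1^{\lambda'}\big)\Big)$$ (the formal version of the equation $\nabla_c(m)=0$; the right-hand side only involves the constant terms $G_1^{\lambda_i}(0)$, since $h$ has simple poles at the $\lambda_i$ and vanishes at $\infty$). Then $m\in M_c$, i.e. every $G_j^\lambda$ converges on the open unit disc $|s_\lambda|<1$; hence $m\in H$.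
   Context: Standing setup. Let $k$ be a finite field of odd characteristic $p$, $W(k)$ its ring of Witt vectors, $K$ the fraction field of $W(k)$, $|\cdot|$ the $p$-adic absolute value. Let $g\ge1$ and let $\lambda_1,\dots,\lambda_{2g+1}\in W(k)$ have pairwise distinct reductions modulo $p$. Put $Q(t)=\prod_{i=1}^{2g+1}(t-\lambda_i)$ and $h(t)=\frac{Q'(t)}{2Q(t)}$. Let $\Lambda=\{\lambda_1,\dots,\lambda_{2g+1},\infty\}$, $\Lambda_0=\Lambda\setminus\{\infty\}$. The local parameter at $\lambda\in\Lambda_0$ is $s_\lambda=t-\lambda$, and at $\infty$ it is $s_\infty=t^{-1}$; $\partial_t$ acts on series in $s_\lambda$ ($\lambda$ finite) as $d/ds_\lambda$ and on series in $s_\infty$ as $-s_\infty^2\,d/ds_\infty$. Let $B_K^\dagger$ be the ring of series $\sum_{\underline\ell\ge0}a_{\underline\ell}\,t^{\ell_0}\prod_{i}(t-\lambda_i)^{-\ell_i}$ ($a_{\underline\ell}\in K$) for which there is $\eta>1$ with $|a_{\underline\ell}|\eta^{\max_i\ell_i}\to0$; $\phi_\lambda(f)$ is the Laurent expansion of $f\in B_K^\dagger$ in $s_\lambda$. The principal part is $\Pr_\lambda(\sum a_\ell s_\lambda^\ell)=\sum_{\ell<0}a_\ell s_\lambda^\ell$ for $\lambda\in\Lambda_0$ and $\Pr_\infty(\sum a_\ell s_\infty^\ell)=\sum_{\ell\le0}a_\ell s_\infty^\ell$; its expansion at another point $\mu$ is denoted $\phi_\mu(\cdot)$ (and $\phi_\lambda(\Pr_\lambda(F))=\Pr_\lambda(F)$).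 For $\lambda\in\Lambda_0$, $\tilde R_{\lambda,c}$ is the space of $\sum_{\ell\ge0}a_\ell s_\lambda^\ell$ with $|a_\ell|\eta^\ell\to0$ for all $\eta<1$, and $R_{\infty,c}$ the analogous space of $\sum_{\ell\ge1}a_\ell s_\infty^\ell$. $B_c=\prod_{\lambda\in\Lambda_0}\tilde R_{\lambda,c}\times R_{\infty,c}$ is a $B_K^\dagger$-module via $(f\cdot G)^\mu=\phi_\mu(f)G^\mu-\sum_{\lambda\in\Lambda}\phi_\mu\big(\Pr_\lambda(\phi_\lambda(f)G^\lambda)\big)$. Let $A_K^\dagger=B_K^\dagger\oplus B_K^\dagger Y$ with $Y^2=Q(t)$, $\nabla_{GM}(1)=0$, $\nabla_{GM}(Y)=hY$; $M_c=A_K^\dagger\otimes_{B_K^\dagger}B_c$ with elements $m_c=1\otimes G_0+Y\otimes G_1$ ($G_0,G_1\in B_c$) and $\nabla_c(m_c)=1\otimes\partial_tG_0+Y\otimes(\partial_tG_1+h\cdot G_1)$. $H=\ker\nabla_c$ (the space $H^1_{MW,c}(V,\pi_*A_K^\dagger)$). *)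

theory Defs
  imports "HOL-Analysis.Analysis" "HOL-Computational_Algebra.Computational_Algebra"
begin

text \<open>(K, nv) is a complete discretely valued non-archimedean field of characteristic 0,
  normalised with nv p = 1/p, value group p^Z (so p is a uniformiser, i.e. K is absolutely
  unramified) and finite residue field (of characteristic p, since nv p < 1).  By Cohen /
  Witt theory such a field is exactly W(k)[1/p] for the finite field k = residue field,
  with its p-adic absolute value.\<close>

definition padic_Witt_field :: "nat \<Rightarrow> ('a::field_char_0 \<Rightarrow> real) \<Rightarrow> bool" where
  "padic_Witt_field p nv \<longleftrightarrow>
     prime p \<and> odd p \<and>
     (\<forall>x. nv x \<ge> 0) \<and> (\<forall>x. nv x = 0 \<longleftrightarrow> x = 0) \<and>
     (\<forall>x y. nv (x * y) = nv x * nv y) \<and>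
     (\<forall>x y. nv (x + y) \<le> max (nv x) (nv y)) \<and>
     nv (of_nat p) = 1 / real p \<and>
     (\<forall>x. x \<noteq> 0 \<longrightarrow> (\<exists>k::int. nv x = real p powr real_of_int k)) \<and>
     (\<forall>X::nat \<Rightarrow> 'a. (\<forall>e>0. \<exists>N. \<forall>m\<ge>N. \<forall>k\<ge>N. nv (X m - X k) < e)
          \<longrightarrow> (\<exists>L. (\<lambda>k. nv (X k - L)) \<longlonglongrightarrow> 0)) \<and>
     (\<exists>R. finite R \<and> (\<forall>x. nv x \<le> 1 \<longrightarrow> (\<exists>r\<in>R. nv r \<le> 1 \<and> nv (x - r) < 1)))"

text \<open>Points of Lambda: Some i stands for lambda_i (i < n), None stands for infinity.\<close>

definition pts :: "nat \<Rightarrow> nat option set" where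
  "pts n = insert None (Some ` {..<n})"

definition Qpoly :: "nat \<Rightarrow> (nat \<Rightarrow> 'a::field) \<Rightarrow> 'a poly" where
  "Qpoly n lam = (\<Prod>i<n. [:- lam i, 1:])"

text \<open>Laurent expansion of a polynomial in t in the local parameter s_mu:
  t = s + lambda_i at lambda_i, t = 1/s at infinity.\<close>

definition phi_poly :: "(nat \<Rightarrow> 'a::field) \<Rightarrow> nat option \<Rightarrow> 'a poly \<Rightarrow> 'a fls" where
  "phi_poly lam mu P = (case mu of
      Some i \<Rightarrow> fps_to_fls (fps_of_poly (pcompose P [:lam i, 1:]))
    | None \<Rightarrow> (\<Sum>k\<le>degree P. fls_const (coeff P k) * fls_X_intpow (- int k)))"

definition phi_rat :: "(nat \<Rightarrow> 'a::field) \<Rightarrow> nat option \<Rightarrow> 'a poly \<Rightarrow> 'a poly \<Rightarrow> 'a fls" where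
  "phi_rat lam mu P R = phi_poly lam mu P / phi_poly lam mu R"

text \<open>The derivation d/dt on Laurent series in s_mu.\<close>

definition dt :: "nat option \<Rightarrow> 'a::field fls \<Rightarrow> 'a fls" where
  "dt mu F = (case mu of Some i \<Rightarrow> fls_deriv F | None \<Rightarrow> - (fls_X ^ 2 * fls_deriv F))"

text \<open>phi_mu(Pr_lambda(F)) for F a Laurent series in s_lambda.  At lambda_j the principal part
  sum_{l<0} a_l s^l is the rational function sum_{k\<ge>1} a_{-k} (t - lambda_j)^{-k}; at infinity
  it is the polynomial sum_{k\<ge>0} a_{-k} t^k.\<close>

definition Pr_at :: "(nat \<Rightarrow> 'a::field) \<Rightarrow> nat option \<Rightarrow> 'a fls \<Rightarrow> nat option \<Rightarrow> 'a fls" where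
  "Pr_at lam la F mu = (case la of
      Some j \<Rightarrow> (\<Sum>k\<le>degree (fls_prpart F).
                  fls_const (coeff (fls_prpart F) k) * (inverse (phi_poly lam mu [:- lam j, 1:])) ^ k)
    | None \<Rightarrow> phi_poly lam mu (fls_prpart F + [:(fls_nth F 0):]))"

text \<open>The B_K^dagger-module action on B_c, for a rational function f = P/R with poles in Lambda:
  (f . G)^mu = phi_mu(f) G^mu - sum_lambda phi_mu(Pr_lambda(phi_lambda(f) G^lambda)).\<close>

definition rat_act :: "nat \<Rightarrow> (nat \<Rightarrow> 'a::field) \<Rightarrow> 'a poly \<Rightarrow> 'a poly
                        \<Rightarrow> (nat option \<Rightarrow> 'a fps) \<Rightarrow> nat option \<Rightarrow> 'a fls" where
  "rat_act n lam P R G mu =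
     phi_rat lam mu P R * fps_to_fls (G mu)
     - (\<Sum>la\<in>pts n. Pr_at lam la (phi_rat lam la P R * fps_to_fls (G la)) mu)"

definition conv_open_disc :: "('a \<Rightarrow> real) \<Rightarrow> 'a fps \<Rightarrow> bool" where
  "conv_open_disc nv G \<longleftrightarrow> (\<forall>eta::real. 0 \<le> eta \<and> eta < 1 \<longrightarrow>
      (\<lambda>l. nv (fps_nth G l) * eta ^ l) \<longlonglongrightarrow> 0)"

definition in_Bc :: "nat \<Rightarrow> ('a::zero \<Rightarrow> real) \<Rightarrow> (nat option \<Rightarrow> 'a fps) \<Rightarrow> bool" where
  "in_Bc n nv G \<longleftrightarrow> (\<forall>la\<in>pts n. conv_open_disc nv (G la)) \<and> fps_nth (G None) 0 = 0"

text \<open>m = 1 (x) G0 + Y (x) G1 lies in M_c.\<close>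

definition in_Mc :: "nat \<Rightarrow> ('a::zero \<Rightarrow> real) \<Rightarrow> (nat option \<Rightarrow> 'a fps) \<Rightarrow> (nat option \<Rightarrow> 'a fps) \<Rightarrow> bool" where
  "in_Mc n nv G0 G1 \<longleftrightarrow> in_Bc n nv G0 \<and> in_Bc n nv G1"

text \<open>m lies in H = ker nabla_c, where
  nabla_c(m) = 1 (x) dt G0 + Y (x) (dt G1 + h . G1), h = Q'/(2Q).\<close>

definition in_H :: "nat \<Rightarrow> ('a::field \<Rightarrow> real) \<Rightarrow> (nat \<Rightarrow> 'a) \<Rightarrow> (nat option \<Rightarrow> 'a fps) \<Rightarrow> (nat option \<Rightarrow> 'a fps) \<Rightarrow> bool" where
  "in_H n nv lam G0 G1 \<longleftrightarrow> in_Mc n nv G0 G1 \<and>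
     (\<forall>mu\<in>pts n. dt mu (fps_to_fls (G0 mu)) = 0 \<and>
        dt mu (fps_to_fls (G1 mu))
          + rat_act n lam (pderiv (Qpoly n lam)) (2 * Qpoly n lam) G1 mu = 0)"

end

theory Submission
  imports Defs
begin

unbundle no vec_syntax
notation fls_nth (infixl "$$" 75)

locale pw =
  fixes p :: nat and nv :: "'a::field_char_0 \<Rightarrow> real"
  assumes K: "padic_Witt_field p nv"
begin

lemma prime_p: "prime p" and odd_p: "odd p" and nv_nonneg: "nv x \<ge> 0"
  and nv_zero_iff: "nv x = 0 \<longleftrightarrow> x = 0" and nv_mult: "nv (x*y) = nv x * nv y"
  and nv_ultra: "nv (x+y) \<le> max (nv x) (nv y)" and nv_p: "nv (of_nat p) = 1 / real p"
  using K unfolding padic_Witt_field_def by auto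

lemma nv_zero[simp]: "nv 0 = 0" using nv_zero_iff by simp

lemma nv_one[simp]: "nv 1 = 1"
proof -
  have "nv 1 = nv 1 * nv 1" using nv_mult[of 1 1] by simp
  moreover have "nv 1 \<noteq> 0" using nv_zero_iff by simp
  ultimately show ?thesis by (metis mult_cancel_left1)
qed

lemma nv_minus_one: "nv (-1) = 1"
proof -
  have "nv (-1) * nv (-1) = 1" using nv_mult[of "-1" "-1"] by simp
  then have "(nv (-1) - 1) * (nv (-1) + 1) = 0" by (simp add: algebra_simps)
  moreover have "nv (-1) + 1 \<noteq> 0" using nv_nonneg[of "-1"] by linarith
  ultimately show ?thesis by simp
qed

lemma nv_minus[simp]: "nv (-x) = nv x"
  using nv_mult[of "-1" x] nv_minus_one by simp

lemma nv_diff: "nv (x - y) \<le> max (nv x) (nv y)"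
  using nv_ultra[of x "-y"] by simp

lemma nv_diff_comm: "nv (x - y) = nv (y - x)"
  by (metis minus_diff_eq nv_minus)

lemma nv_add_le: "nv x \<le> B \<Longrightarrow> nv y \<le> B \<Longrightarrow> nv (x+y) \<le> B"
  using nv_ultra[of x y] by linarith

lemma nv_sum_le:
  assumes "\<And>i. i \<in> S \<Longrightarrow> nv (f i) \<le> B" "B \<ge> 0"
  shows "nv (sum f S) \<le> B"
  using assms
proof (induction S rule: infinite_finite_induct)
  case (insert x F) then show ?case by (simp add: nv_add_le)
qed auto

lemma nv_of_nat_le: "nv (of_nat m) \<le> 1"
  by (induction m) (auto intro: nv_add_le)

lemma nv_of_int_le: "nv (of_int m) \<le> 1"
  by (cases m rule: int_cases2) (auto simp: nv_of_nat_le)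

lemma nv_inverse: "nv (inverse x) = 1 / nv x"
proof (cases "x = 0")
  case False
  then have h: "nv (inverse x) * nv x = 1" using nv_mult[of "inverse x" x] by (simp del: inverse_eq_divide)
  have nz: "nv x \<noteq> 0" using False nv_zero_iff by simp
  from h nz show ?thesis by (simp add: eq_divide_eq del: inverse_eq_divide)
qed simp

lemma nv_divide: "nv (x / y) = nv x / nv y"
  by (simp add: divide_inverse nv_mult nv_inverse)

lemma nv_power: "nv (x ^ k) = nv x ^ k"
  by (induction k) (auto simp: nv_mult)

lemma nv_prod: "nv (prod f S) = (\<Prod>i\<in>S. nv (f i))"
  by (induction S rule: infinite_finite_induct) (auto simp: nv_mult)

lemma p_gt1: "p > 1" using prime_p prime_gt_1_nat by blast

lemma nv_coprime:
  assumes "\<not> p dvd m" shows "nv (of_nat m) = 1"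
proof (rule ccontr)
  assume ne: "nv (of_nat m) \<noteq> 1"
  then have lt: "nv (of_nat m) < 1" using nv_of_nat_le[of m] by simp
  have "coprime p m" using assms prime_p by (simp add: prime_imp_coprime)
  then have "coprime (int p) (int m)" by simp
  then have "gcd (int p) (int m) = 1" by simp
  then obtain u v :: int where uv: "u * int p + v * int m = 1"
    using bezout_int[of "int p" "int m"] by metis
  have e: "(1::'a) = of_int u * of_nat p + of_int v * of_nat m"
  proof -
    have "(of_int (u * int p + v * int m) :: 'a) = 1" using uv by simp
    then show ?thesis by simp
  qed
  have "nv (1::'a) \<le> max (nv (of_int u * of_nat p :: 'a)) (nv (of_int v * of_nat m :: 'a))"
    by (subst e) (rule nv_ultra)
  then have le: "1 \<le> max (nv (of_int u :: 'a) * nv (of_nat p :: 'a)) (nv (of_int v :: 'a) * nv (of_nat m :: 'a))"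
    by (simp only: nv_mult nv_one)
  have a: "nv (of_int u :: 'a) * nv (of_nat p :: 'a) < 1"
  proof -
    have "nv (of_nat p :: 'a) < 1" using nv_p p_gt1 by simp
    moreover have "nv (of_int u :: 'a) \<le> 1" "0 \<le> nv (of_int u :: 'a)" "0 \<le> nv (of_nat p :: 'a)"
      using nv_of_int_le nv_nonneg by auto
    ultimately show ?thesis by (metis mult_left_le_one_le le_less_trans)
  qed
  have b: "nv (of_int v :: 'a) * nv (of_nat m :: 'a) < 1"
  proof -
    have "nv (of_int v :: 'a) \<le> 1" "0 \<le> nv (of_int v :: 'a)" "0 \<le> nv (of_nat m :: 'a)"
      using nv_of_int_le nv_nonneg by auto
    with lt show ?thesis by (metis mult_left_le_one_le le_less_trans)
  qed
  from le a b show False by linarith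
qed

lemma nv_two: "nv (2::'a) = 1"
proof -
  have "\<not> p dvd 2"
  proof
    assume "p dvd 2"
    then have "p \<le> 2" by (simp add: dvd_imp_le)
    then have "p = 2" using p_gt1 by simp
    then show False using odd_p by simp
  qed
  then show ?thesis using nv_coprime[of 2] by simp
qed

lemma nv_of_nat_ge: "m > 0 \<Longrightarrow> nv (of_nat m :: 'a) \<ge> 1 / real m"
proof (induction m rule: less_induct)
  case (less m)
  show ?case
  proof (cases "p dvd m")
    case True
    then obtain k where k: "m = p * k" by blast
    with less.prems have kpos: "k > 0" by simp
    have kl: "k < m" using k kpos p_gt1 by simp
    have e: "nv (of_nat m :: 'a) = (1 / real p) * nv (of_nat k :: 'a)"
      by (simp only: k of_nat_mult nv_mult nv_p)
    have "(1 / real p) * (1 / real k) \<le> (1 / real p) * nv (of_nat k :: 'a)"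
      using less.IH[OF kl kpos] by (intro mult_left_mono) auto
    moreover have "(1 / real p) * (1 / real k) = 1 / real m" by (simp add: k)
    ultimately show ?thesis using e by simp
  next
    case False
    then show ?thesis using nv_coprime less.prems by simp
  qed
qed

lemma nv_of_int_ge: "m \<noteq> 0 \<Longrightarrow> nv (of_int m :: 'a) \<ge> 1 / real_of_int \<bar>m\<bar>"
proof -
  assume "m \<noteq> 0"
  have "nv (of_int m :: 'a) = nv (of_nat (nat \<bar>m\<bar>) :: 'a)"
    by (cases m rule: int_cases2) auto
  then show ?thesis using nv_of_nat_ge[of "nat \<bar>m\<bar>"] \<open>m \<noteq> 0\<close> by simp
qed

end

context pw
begin

definition integ :: "'a fps \<Rightarrow> bool" where "integ f \<longleftrightarrow> (\<forall>k. nv (f $ k) \<le> 1)"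
definition bnd :: "'a fps \<Rightarrow> bool" where "bnd f \<longleftrightarrow> (\<exists>C. \<forall>k. nv (f $ k) \<le> C)"

lemma nv_mult_le: "nv x \<le> A \<Longrightarrow> nv y \<le> B \<Longrightarrow> nv (x*y) \<le> A * B"
  by (simp add: nv_mult mult_mono' nv_nonneg)

lemma fps_mult_nv_le:
  assumes "\<And>i. nv (f $ i) \<le> A" "\<And>i. nv (g $ i) \<le> B"
  shows "nv ((f * g) $ k) \<le> A * B"
proof -
  have A: "A \<ge> 0" using assms(1)[of 0] nv_nonneg[of "f$0"] by linarith
  have B: "B \<ge> 0" using assms(2)[of 0] nv_nonneg[of "g$0"] by linarith
  show ?thesis unfolding fps_mult_nth
    by (rule nv_sum_le) (auto intro!: nv_mult_le assms simp: A B)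
qed

lemma integ_mult: "integ f \<Longrightarrow> integ g \<Longrightarrow> integ (f * g)"
  unfolding integ_def using fps_mult_nv_le[of f 1 g 1] by (metis mult_1)

lemma integ_add: "integ f \<Longrightarrow> integ g \<Longrightarrow> integ (f + g)"
  unfolding integ_def fps_add_nth by (metis nv_add_le)

lemma integ_diff: "integ f \<Longrightarrow> integ g \<Longrightarrow> integ (f - g)"
  unfolding integ_def fps_sub_nth by (metis nv_add_le nv_minus diff_conv_add_uminus)

lemma integ_one: "integ 1" unfolding integ_def by (simp add: fps_one_nth)

lemma integ_X: "integ fps_X" unfolding integ_def by (simp add: fps_X_def)

lemma integ_const: "nv c \<le> 1 \<Longrightarrow> integ (fps_const c)" unfolding integ_def by simp

lemma integ_prod: "(\<And>i. i \<in> S \<Longrightarrow> integ (f i)) \<Longrightarrow> integ (prod f S)"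
  by (induction S rule: infinite_finite_induct) (auto intro: integ_mult integ_one)

lemma bnd_integ: "integ f \<Longrightarrow> bnd f" unfolding integ_def bnd_def by blast

lemma bnd_add: "bnd f \<Longrightarrow> bnd g \<Longrightarrow> bnd (f + g)"
proof -
  assume "bnd f" "bnd g"
  then obtain A B where "\<forall>k. nv (f $ k) \<le> A" "\<forall>k. nv (g $ k) \<le> B" unfolding bnd_def by blast
  then have "\<forall>k. nv ((f+g) $ k) \<le> max A B"
    by (metis fps_add_nth max.coboundedI1 max.coboundedI2 nv_add_le)
  then show ?thesis unfolding bnd_def by blast
qed

lemma bnd_zero: "bnd 0" unfolding bnd_def by auto

lemma bnd_sum: "(\<And>i. i \<in> S \<Longrightarrow> bnd (f i)) \<Longrightarrow> bnd (sum f S)"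
  by (induction S rule: infinite_finite_induct) (auto intro: bnd_add bnd_zero)

lemma bnd_mult: "bnd f \<Longrightarrow> integ g \<Longrightarrow> bnd (f * g)"
proof -
  assume "bnd f" "integ g"
  then obtain A where "\<And>k. nv (f $ k) \<le> A" "\<And>k. nv (g $ k) \<le> 1" unfolding bnd_def integ_def by blast
  then have "\<forall>k. nv ((f*g) $ k) \<le> A * 1" using fps_mult_nv_le by blast
  then show ?thesis unfolding bnd_def by blast
qed

lemma bnd_const_mult: "bnd f \<Longrightarrow> bnd (fps_const c * f)"
proof -
  assume "bnd f"
  then obtain A where "\<And>k. nv (f $ k) \<le> A" unfolding bnd_def by blast
  then have "\<forall>k. nv ((fps_const c * f) $ k) \<le> nv c * A" by (simp add: nv_mult mult_left_mono nv_nonneg)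
  then show ?thesis unfolding bnd_def by blast
qed

lemma bnd_poly: "bnd (fps_of_poly P)"
proof -
  have "\<forall>k. nv (fps_of_poly P $ k) \<le> (\<Sum>i\<le>degree P. nv (coeff P i))"
  proof
    fix k
    show "nv (fps_of_poly P $ k) \<le> (\<Sum>i\<le>degree P. nv (coeff P i))"
    proof (cases "k \<le> degree P")
      case True
      then show ?thesis unfolding fps_of_poly_nth
        by (intro member_le_sum) (auto simp: nv_nonneg)
    next
      case False
      then show ?thesis by (simp add: coeff_eq_0 sum_nonneg nv_nonneg)
    qed
  qed
  then show ?thesis unfolding bnd_def by blast
qed

lemma div_bound:
  assumes V: "integ V" "V $ 0 = 1" and eq: "V * Y = Z"
    and M: "mono M" and Z: "\<And>k. nv (Z $ k) \<le> M k" and M0: "\<And>k. M k \<ge> 0"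
  shows "nv (Y $ k) \<le> M k"
proof (induction k rule: less_induct)
  case (less k)
  define S where "S = (\<Sum>i=1..k. V $ i * Y $ (k - i))"
  have "Z $ k = (\<Sum>i=0..k. V $ i * Y $ (k - i))" unfolding eq[symmetric] fps_mult_nth by simp
  also have "\<dots> = V $ 0 * Y $ (k - 0) + S"
    unfolding S_def using sum.atLeast_Suc_atMost[of 0 k "\<lambda>i. V $ i * Y $ (k - i)"] by simp
  finally have YZ: "Y $ k = Z $ k - S" using V(2) by simp
  have S: "nv S \<le> M k" unfolding S_def
  proof (rule nv_sum_le)
    fix i assume i: "i \<in> {1..k}"
    have "nv (Y $ (k - i)) \<le> M (k - i)" using i by (intro less.IH) auto
    also have "\<dots> \<le> M k" using M by (simp add: monoD)
    finally have "nv (Y $ (k - i)) \<le> M k" .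
    moreover have "nv (V $ i) \<le> 1" using V(1) unfolding integ_def by blast
    ultimately show "nv (V $ i * Y $ (k - i)) \<le> M k"
      using nv_mult_le[of "V$i" 1 "Y $ (k-i)" "M k"] by simp
  qed (rule M0)
  have "nv (Y $ k) \<le> max (nv (Z $ k)) (nv S)" unfolding YZ by (rule nv_diff)
  then show ?case using S Z[of k] by linarith
qed

lemma sqrt_integ:
  assumes U: "integ U" "U $ 0 = 1"
  shows "\<exists>V. integ V \<and> V $ 0 = 1 \<and> V * V = U"
proof -
  define V where "V = fps_radical (\<lambda>k x. 1) 2 U"
  have V0: "V $ 0 = 1" by (simp add: V_def)
  have "(fps_radical (\<lambda>k x. 1) (Suc 1) U) ^ (Suc 1) = U"
    using power_radical[of U "\<lambda>k x. 1" 1] U(2) by simp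
  then have VV: "V * V = U" unfolding V_def by (simp add: numeral_2_eq_2 power2_eq_square)
  have "nv (V $ k) \<le> 1" for k
  proof (induction k rule: less_induct)
    case (less k)
    show ?case
    proof (cases k)
      case 0 then show ?thesis using V0 by simp
    next
      case (Suc m)
      define S where "S = (\<Sum>i=1..m. V $ i * V $ (k - i))"
      have "U $ k = (\<Sum>i=0..k. V $ i * V $ (k - i))" unfolding VV[symmetric] fps_mult_nth by simp
      also have "\<dots> = V $ 0 * V $ (k - 0) + (\<Sum>i=1..k. V $ i * V $ (k - i))"
        using sum.atLeast_Suc_atMost[of 0 k "\<lambda>i. V $ i * V $ (k - i)"] by simp
      also have "(\<Sum>i=1..k. V $ i * V $ (k - i)) = S + V $ k * V $ 0"
        unfolding S_def Suc by simp
      finally have "2 * V $ k = U $ k - S" using V0 by (simp add: algebra_simps)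
      moreover have S: "nv S \<le> 1" unfolding S_def
      proof (rule nv_sum_le)
        fix i assume i: "i \<in> {1..m}"
        have "nv (V $ i) \<le> 1" using i Suc by (intro less.IH) auto
        moreover have "nv (V $ (k - i)) \<le> 1" using i Suc by (intro less.IH) auto
        ultimately show "nv (V $ i * V $ (k - i)) \<le> 1" using nv_mult_le[of "V $ i" 1 "V $ (k-i)" 1] by simp
      qed simp
      moreover have "nv (U $ k) \<le> 1" using U(1) unfolding integ_def by simp
      ultimately have "nv (2 * V $ k) \<le> 1" using nv_diff[of "U $ k" S] by simp
      then show ?thesis by (simp add: nv_mult nv_two)
    qed
  qed
  then show ?thesis using V0 VV unfolding integ_def by blast
qed

end

context pw
begin

lemma conv_from_bound:
  assumes C: "\<And>k. nv (G $ k) \<le> C * (2 * real k + N)"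
  shows "conv_open_disc nv G"
  unfolding conv_open_disc_def
proof (intro allI impI)
  fix eta :: real assume eta: "0 \<le> eta \<and> eta < 1"
  have l1: "(\<lambda>n. real n * eta ^ n) \<longlonglongrightarrow> 0" using powser_times_n_limit_0[of eta] eta by simp
  have l2: "(\<lambda>n. eta ^ n) \<longlonglongrightarrow> 0" using eta by (intro LIMSEQ_power_zero) simp
  have "(\<lambda>n. C * (2 * (real n * eta ^ n) + N * eta ^ n)) \<longlonglongrightarrow> C * (2 * 0 + N * 0)"
    by (intro tendsto_intros l1 l2)
  then have lim: "(\<lambda>n. C * (2 * real n + N) * eta ^ n) \<longlonglongrightarrow> 0" by (simp add: algebra_simps)
  show "(\<lambda>l. nv (G $ l) * eta ^ l) \<longlonglongrightarrow> 0"
  proof (rule Lim_null_comparison[OF _ lim])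
    show "\<forall>\<^sub>F n in sequentially. norm (nv (G $ n) * eta ^ n) \<le> C * (2 * real n + N) * eta ^ n"
      using C eta nv_nonneg by (auto intro!: always_eventually mult_right_mono)
  qed
qed

lemma core_conv:
  fixes c :: "nat \<Rightarrow> int" and N :: nat
  assumes V: "integ V" "V $ 0 = 1" and FG: "F = V * G"
    and c0: "\<And>k. c k \<noteq> 0" and cb: "\<And>k. \<bar>c k\<bar> \<le> 2 * int k + int N"
    and eq: "\<And>k. of_int (c k) * F $ k = R $ k" and R: "bnd R"
  shows "conv_open_disc nv G"
proof -
  obtain C where C: "\<And>k. nv (R $ k) \<le> C" using R unfolding bnd_def by blast
  have C0: "C \<ge> 0" using C[of 0] nv_nonneg[of "R $ 0"] by linarith
  define M where "M k = C * (2 * real k + N)" for k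
  have Fb: "nv (F $ k) \<le> M k" for k
  proof -
    have ge: "nv (of_int (c k) :: 'a) \<ge> 1 / real_of_int \<bar>c k\<bar>" using nv_of_int_ge c0 by blast
    have cpos: "real_of_int \<bar>c k\<bar> > 0" using c0 by simp
    have nvpos: "nv (of_int (c k) :: 'a) > 0" using ge cpos by (smt (verit) divide_pos_pos)
    have "nv (of_int (c k) :: 'a) * nv (F $ k) = nv (R $ k)" using eq[of k] nv_mult[of "of_int (c k)" "F $ k"] by simp
    then have "nv (F $ k) = nv (R $ k) / nv (of_int (c k) :: 'a)" using nvpos by (simp add: field_simps)
    also have "\<dots> \<le> C / nv (of_int (c k) :: 'a)" using C nvpos by (simp add: divide_right_mono)
    also have "\<dots> \<le> C * real_of_int \<bar>c k\<bar>"
    proof -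
      have "1 / nv (of_int (c k) :: 'a) \<le> real_of_int \<bar>c k\<bar>"
        using ge cpos nvpos by (simp add: field_simps)
      then show ?thesis using C0 by (metis mult_left_mono times_divide_eq_right mult.right_neutral)
    qed
    also have "\<dots> \<le> M k"
    proof -
      have "real_of_int \<bar>c k\<bar> \<le> real_of_int (2 * int k + int N)" using cb[of k] by (simp only: of_int_le_iff)
      then have "real_of_int \<bar>c k\<bar> \<le> 2 * real k + real N" by simp
      then show ?thesis unfolding M_def using C0 by (intro mult_left_mono) auto
    qed
    finally show ?thesis .
  qed
  have "nv (G $ k) \<le> M k" for k
  proof (rule div_bound[OF V FG[symmetric]])
    show "mono M" unfolding M_def using C0 by (intro monoI mult_left_mono) auto
    show "nv (F $ k) \<le> M k" for k by (rule Fb)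
    show "M k \<ge> 0" for k unfolding M_def using C0 by simp
  qed
  then show ?thesis unfolding M_def by (rule conv_from_bound)
qed

end

lemma X_Xinv: "fls_X * fls_X_inv = (1::'a::field fls)"
  by (simp add: fls_X_inv_times_conv_shift)

lemma Xinv_X: "fls_X_inv * fls_X = (1::'a::field fls)"
  by (simp add: fls_X_inv_times_conv_shift)

definition ev :: "'a::field fls \<Rightarrow> 'a poly \<Rightarrow> 'a fls" where
  "ev x P = poly (map_poly fls_const P) x"

definition xpt :: "(nat \<Rightarrow> 'a::field) \<Rightarrow> nat option \<Rightarrow> 'a fls" where
  "xpt lam mu = (case mu of Some i \<Rightarrow> fls_const (lam i) + fls_X | None \<Rightarrow> fls_X_inv)"

lemma ev_0[simp]: "ev x 0 = 0" by (simp add: ev_def)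

lemma ev_pCons: "ev x (pCons a P) = fls_const a + x * ev x P"
  by (cases "a = 0 \<and> P = 0") (auto simp: ev_def map_poly_pCons)

lemma ev_const[simp]: "ev x [:a:] = fls_const a"
  using ev_pCons[of x a 0] by simp

lemma ev_add: "ev x (P + Q) = ev x P + ev x Q"
proof (induction P arbitrary: Q)
  case (pCons a P)
  show ?case
  proof (cases Q)
    case (pCons b Q')
    have ih: "ev x (P + Q') = ev x P + ev x Q'" by (rule pCons.IH)
    show ?thesis unfolding pCons(1) add_pCons ev_pCons ih fls_plus_const[symmetric]
      by (simp add: distrib_left add_ac)
  qed
qed simp

lemma ev_smult: "ev x (smult a P) = fls_const a * ev x P"
  by (induction P) (simp_all add: ev_pCons algebra_simps)

lemma ev_mult: "ev x (P * Q) = ev x P * ev x Q"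
  by (induction P) (simp_all add: ev_pCons ev_add ev_smult algebra_simps)

lemma ev_one[simp]: "ev x 1 = 1"
  by (simp add: one_pCons)

lemma ev_prod: "ev x (prod f S) = (\<Prod>i\<in>S. ev x (f i))"
  by (induction S rule: infinite_finite_induct) (simp_all add: ev_mult)

lemma ev_two: "ev x (2 * P) = 2 * ev x P"
proof -
  have "(2::'a poly) = 1 + 1" by simp
  then have "ev x 2 = 2" using ev_add[of x 1 1] by simp
  then show ?thesis by (simp add: ev_mult)
qed

lemma ev_lin: "ev x [:-c, 1:] = x - fls_const c"
  by (simp add: ev_pCons)

lemma ev_deriv: "fls_deriv (ev x P) = ev x (pderiv P) * fls_deriv x"
  by (induction P) (simp_all add: ev_pCons pderiv_pCons ev_add algebra_simps)

lemma phi_ev: "phi_poly lam mu P = ev (xpt lam mu) P"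
proof (cases mu)
  case None
  have e: "fls_X_intpow (- int k) = (fls_X_inv :: 'a fls) ^ k" for k
    by (simp add: fls_X_inv_power_conv_shift_1)
  have "ev fls_X_inv P = (\<Sum>k\<le>degree P. fls_const (coeff P k) * fls_X_inv ^ k)"
    unfolding ev_def poly_altdef
    by (simp add: degree_map_poly coeff_map_poly fls_const_nonzero)
  then show ?thesis using None by (simp add: phi_poly_def xpt_def fls_X_inv_power_conv_shift_1)
next
  case (Some i)
  have "fps_to_fls (fps_of_poly (pcompose P [:lam i, 1:])) = ev (fls_const (lam i) + fls_X) P"
  proof (induction P)
    case 0 then show ?case by simp
  next
    case (pCons a P)
    have l: "fps_of_poly [:lam i, 1:] = fps_const (lam i) + fps_X"
      by (simp add: fps_of_poly_pCons fps_of_poly_const)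
    have h: "fps_of_poly (pcompose (pCons a P) [:lam i, 1:]) =
        fps_const a + (fps_const (lam i) + fps_X) * fps_of_poly (pcompose P [:lam i, 1:])"
      by (simp only: pcompose_pCons fps_of_poly_add fps_of_poly_mult fps_of_poly_const l)
    show ?case unfolding h fps_to_fls_plus fls_times_fps_to_fls pCons.IH
      by (simp add: ev_pCons)
  qed
  then show ?thesis using Some by (simp add: phi_poly_def xpt_def)
qed

lemma dt_ev: "dt mu (ev (xpt lam mu) P) = ev (xpt lam mu) (pderiv P)"
proof (cases mu)
  case None
  have "dt mu (ev (xpt lam mu) P) = - (fls_X\<^sup>2 * (ev fls_X_inv (pderiv P) * - (fls_X_inv\<^sup>2)))"
    using None by (simp add: dt_def xpt_def ev_deriv)
  also have "\<dots> = ev fls_X_inv (pderiv P) * (fls_X * fls_X_inv)\<^sup>2" by (simp add: algebra_simps power2_eq_square)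
  finally show ?thesis using None by (simp add: X_Xinv xpt_def)
next
  case (Some i)
  then show ?thesis by (simp add: dt_def xpt_def ev_deriv)
qed

lemma phi_rat_ev: "phi_rat lam mu (pderiv Q) (2 * Q) = dt mu (ev (xpt lam mu) Q) / (2 * ev (xpt lam mu) Q)"
  by (simp add: phi_rat_def phi_ev dt_ev ev_two)


lemma Pr_None_zero:
  assumes "fls_prpart F = 0" "F $$ 0 = 0"
  shows "Pr_at lam None F mu = 0"
  using assms by (simp add: Pr_at_def phi_ev)

lemma Pr_Some:
  fixes F :: "'a::field fls"
  assumes F2: "\<And>k. k \<ge> 2 \<Longrightarrow> F $$ (- int k) = 0"
  shows "Pr_at lam (Some j) F mu = fls_const (F $$ -1) * inverse (phi_poly lam mu [:-lam j, 1:])"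
proof -
  define P where "P = fls_prpart F"
  have c0: "coeff P 0 = 0" unfolding P_def by simp
  have c1: "coeff P 1 = F $$ -1" unfolding P_def by simp
  have "degree P \<le> 1" unfolding P_def
    by (rule degree_le) (auto intro: F2)
  then have "degree P = 0 \<or> degree P = 1" by auto
  then show ?thesis
  proof
    assume d: "degree P = 0"
    then have "coeff P 1 = 0" by (simp add: coeff_eq_0)
    then show ?thesis using d c0 c1 by (simp add: Pr_at_def P_def[symmetric])
  next
    assume d: "degree P = 1"
    show ?thesis using d c0 c1 by (simp add: Pr_at_def P_def[symmetric] numeral_2_eq_2)
  qed
qed

lemma pts_sum: "(\<Sum>la\<in>pts n. f la) = f None + (\<Sum>j<n. f (Some j))"
  unfolding pts_def by (simp add: sum.reindex)

lemma RHS_form: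
  fixes F :: "nat option \<Rightarrow> 'a::field fls"
  assumes N: "fls_prpart (F None) = 0" "F None $$ 0 = 0"
    and S: "\<And>j k. j < n \<Longrightarrow> k \<ge> 2 \<Longrightarrow> F (Some j) $$ (- int k) = 0"
  shows "(\<Sum>la'\<in>pts n. Pr_at lam la' (F la') mu)
       = (\<Sum>j<n. fls_const (F (Some j) $$ -1) * inverse (ev (xpt lam mu) [:-lam j, 1:]))"
  unfolding pts_sum Pr_None_zero[OF N]
  by (auto intro!: sum.cong simp: Pr_Some S phi_ev)

lemma Qev: "ev x (Qpoly n lam) = (\<Prod>j<n. ev x [:-lam j, 1:])"
  by (simp add: Qpoly_def ev_prod)

lemma Yq_RHS:
  fixes x :: "'a::field fls"
  assumes nz: "\<And>j. j < n \<Longrightarrow> ev x [:-lam j, 1:] \<noteq> 0"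
  shows "2 * ev x (Qpoly n lam) * (\<Sum>j<n. fls_const (a j) * inverse (ev x [:-lam j, 1:]))
       = (\<Sum>j<n. fls_const (2 * a j) * (\<Prod>l\<in>{..<n}-{j}. ev x [:-lam l, 1:]))"
  unfolding sum_distrib_left
proof (rule sum.cong[OF refl])
  fix j assume j: "j \<in> {..<n}"
  have "ev x (Qpoly n lam) = ev x [:-lam j, 1:] * (\<Prod>l\<in>{..<n}-{j}. ev x [:-lam l, 1:])"
    unfolding Qev using j by (simp add: prod.remove)
  moreover have "fls_const (2 * a j) = 2 * fls_const (a j)"
    by (metis fls_const_mult_const fls_const_numeral)
  ultimately show "2 * ev x (Qpoly n lam) * (fls_const (a j) * inverse (ev x [:-lam j, 1:]))
      = fls_const (2 * a j) * (\<Prod>l\<in>{..<n}-{j}. ev x [:-lam l, 1:])"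
    using nz[of j] j by (simp add: field_simps)
qed


lemma fps_to_fls_prod: "fps_to_fls (prod f S) = (\<Prod>i\<in>S. fps_to_fls (f i))"
  by (induction S rule: infinite_finite_induct) (simp_all add: fls_times_fps_to_fls)

lemma fps_prod_nth0: "(prod f S) $ 0 = (\<Prod>i\<in>S. f i $ 0)"
  by (induction S rule: infinite_finite_induct) simp_all

locale pwl = pw p nv for p :: nat and nv :: "'a::field_char_0 \<Rightarrow> real" +
  fixes n :: nat and lam :: "nat \<Rightarrow> 'a"
  assumes lam_int: "\<And>i. i < n \<Longrightarrow> nv (lam i) \<le> 1"
    and lam_dist: "\<And>i j. i < n \<Longrightarrow> j < n \<Longrightarrow> i \<noteq> j \<Longrightarrow> \<not> nv (lam i - lam j) < 1"
begin

definition ell :: "nat \<Rightarrow> nat \<Rightarrow> 'a fps" where "ell i j = fps_const (lam i - lam j) + fps_X"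
definition UU :: "nat \<Rightarrow> 'a fps" where "UU i = (\<Prod>j\<in>{..<n}-{i}. ell i j)"

lemma nv_lamdiff_le: "i < n \<Longrightarrow> j < n \<Longrightarrow> nv (lam i - lam j) \<le> 1"
  using nv_diff[of "lam i" "lam j"] lam_int[of i] lam_int[of j] by simp

lemma nv_lamdiff: "i < n \<Longrightarrow> j < n \<Longrightarrow> i \<noteq> j \<Longrightarrow> nv (lam i - lam j) = 1"
  using nv_lamdiff_le lam_dist by force

lemma ev_fin_lin: "ev (xpt lam (Some i)) [:-lam j, 1:] = fps_to_fls (ell i j)"
proof -
  have c: "fls_const (lam i - lam j) = fls_const (lam i) - fls_const (lam j)"
    by (metis fls_plus_const fls_const_uminus diff_conv_add_uminus)
  have "fls_const (lam i) + fls_X - fls_const (lam j) = fls_const (lam i - lam j) + (fls_X :: 'a fls)"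
    unfolding c by (simp add: algebra_simps)
  then show ?thesis by (simp add: ev_lin xpt_def ell_def)
qed

lemma ell_integ: "i < n \<Longrightarrow> j < n \<Longrightarrow> integ (ell i j)"
  unfolding ell_def by (intro integ_add integ_const integ_X nv_lamdiff_le)

lemma ell_nz: "ell i j \<noteq> 0"
proof
  assume "ell i j = 0"
  then have "ell i j $ 1 = 0" by simp
  then show False by (simp add: ell_def)
qed

lemma ev_fin_nz: "ev (xpt lam (Some i)) [:-lam j, 1:] \<noteq> 0"
  by (simp add: ev_fin_lin ell_nz)

lemma ell_ii: "ell i i = fps_X" by (simp add: ell_def)

lemma Yq_fin: "i < n \<Longrightarrow> ev (xpt lam (Some i)) (Qpoly n lam) = fps_to_fls (fps_X * UU i)"
proof -
  assume i: "i < n"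
  have "ev (xpt lam (Some i)) (Qpoly n lam) = fps_to_fls (\<Prod>j<n. ell i j)"
    by (simp add: Qev ev_fin_lin fps_to_fls_prod)
  also have "(\<Prod>j<n. ell i j) = ell i i * UU i" unfolding UU_def using i by (simp add: prod.remove)
  finally show ?thesis by (simp add: ell_ii)
qed

lemma UU_integ: "i < n \<Longrightarrow> integ (UU i)"
  unfolding UU_def by (intro integ_prod ell_integ) auto

lemma UU0: "i < n \<Longrightarrow> nv (UU i $ 0) = 1"
  unfolding UU_def fps_prod_nth0 nv_prod by (intro prod.neutral) (auto simp: ell_def nv_lamdiff)

end

lemma fps_to_fls_sum: "fps_to_fls (sum f S) = (\<Sum>i\<in>S. fps_to_fls (f i))"
  by (induction S rule: infinite_finite_induct) simp_all

context pw
begin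

lemma bnd_div:
  assumes V: "integ V" "V $ 0 = 1" and eq: "V * Y = Z" and Z: "bnd Z"
  shows "bnd Y"
proof -
  obtain C where C: "\<And>k. nv (Z $ k) \<le> C" using Z unfolding bnd_def by blast
  have C0: "C \<ge> 0" using C[of 0] nv_nonneg[of "Z $ 0"] by linarith
  have "nv (Y $ k) \<le> (\<lambda>_. C) k" for k
    by (rule div_bound[OF V eq]) (auto simp: C C0 mono_def)
  then show ?thesis unfolding bnd_def by blast
qed

end

context pwl
begin

lemma UU_nz: "i < n \<Longrightarrow> UU i \<noteq> 0"
  using UU0[of i] by auto

lemma fin_prpart:
  assumes i: "i < n" and k: "k \<ge> 2"
  shows "(phi_rat lam (Some i) (pderiv (Qpoly n lam)) (2 * Qpoly n lam) * fps_to_fls G) $$ (- int k) = 0"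
proof -
  define Y where "Y = fps_to_fls (fps_X * UU i)"
  define E where "E = phi_rat lam (Some i) (pderiv (Qpoly n lam)) (2 * Qpoly n lam) * fps_to_fls G"
  have Yq: "ev (xpt lam (Some i)) (Qpoly n lam) = Y" using Yq_fin[OF i] by (simp add: Y_def)
  have Ynz: "Y \<noteq> 0" using UU_nz[OF i] by (simp add: Y_def)
  have h: "phi_rat lam (Some i) (pderiv (Qpoly n lam)) (2 * Qpoly n lam) = fls_deriv Y / (2 * Y)"
    using phi_rat_ev[of lam "Some i" "Qpoly n lam"] Yq by (simp add: dt_def)
  have key: "(2 * Y) * E = fls_deriv Y * fps_to_fls G"
    unfolding E_def h using Ynz by (simp add: field_simps)
  have sY: "fls_subdegree Y = 1"
  proof -
    have "subdegree (fps_X * UU i) = 1"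
      using UU_nz[OF i] UU0[OF i] by (subst fps_subdegree_mult_fps_X) (auto simp: subdegree_eq_0_iff)
    then show ?thesis by (simp add: Y_def fls_subdegree_fls_to_fps)
  qed
  have "E $$ (- int k) = 0"
  proof (cases "E = 0")
    case True then show ?thesis by simp
  next
    case False
    have "fls_deriv Y * fps_to_fls G \<noteq> 0" using key False Ynz by auto
    moreover have "fls_deriv Y * fps_to_fls G = fps_to_fls (fps_deriv (fps_X * UU i) * G)"
      by (simp add: Y_def fls_deriv_fps_to_fls fls_times_fps_to_fls)
    ultimately have "fls_subdegree (fls_deriv Y * fps_to_fls G) \<ge> 0"
      by (simp add: fls_subdegree_fls_to_fps)
    moreover have "fls_subdegree ((2 * Y) * E) = 1 + fls_subdegree E"
      using False Ynz sY by simp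
    ultimately have "fls_subdegree E \<ge> -1" using key by simp
    then show ?thesis using k by (intro fls_eq0_below_subdegree) simp
  qed
  then show ?thesis by (simp add: E_def)
qed


lemma fin_conv:
  assumes i: "i < n"
    and eq: "fls_deriv (fps_to_fls G)
        + phi_rat lam (Some i) (pderiv (Qpoly n lam)) (2 * Qpoly n lam) * fps_to_fls G
        = (\<Sum>j<n. fls_const (a j) * inverse (ev (xpt lam (Some i)) [:-lam j, 1:]))"
  shows "conv_open_disc nv G"
proof -
  define x where "x = xpt lam (Some i)"
  define U where "U = UU i"
  define Y where "Y = fps_to_fls (fps_X * U)"
  have Yq: "ev x (Qpoly n lam) = Y" using Yq_fin[OF i] by (simp add: Y_def x_def U_def)
  have Ynz: "Y \<noteq> 0" using UU_nz[OF i] by (simp add: Y_def U_def)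
  have h: "phi_rat lam (Some i) (pderiv (Qpoly n lam)) (2 * Qpoly n lam) = fls_deriv Y / (2 * Y)"
    using phi_rat_ev[of lam "Some i" "Qpoly n lam"] Yq by (simp add: dt_def x_def)
  define P1 where "P1 = (\<Sum>j<n. fps_const (2 * a j) * (\<Prod>l\<in>{..<n}-{j}. ell i l))"
  have bP1: "bnd P1" unfolding P1_def
    by (intro bnd_sum bnd_const_mult bnd_integ integ_prod ell_integ i) auto
  have "2 * Y * (\<Sum>j<n. fls_const (a j) * inverse (ev x [:-lam j, 1:])) = fps_to_fls P1"
    unfolding Yq[symmetric] P1_def
    by (subst Yq_RHS) (auto simp: x_def ev_fin_nz ev_fin_lin fps_to_fls_sum fps_to_fls_prod fls_times_fps_to_fls ell_nz)
  moreover have "2 * Y * (fls_deriv (fps_to_fls G) + fls_deriv Y / (2 * Y) * fps_to_fls G)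
      = fps_to_fls (fps_const 2 * (fps_X * U) * fps_deriv G) + fps_to_fls (fps_deriv (fps_X * U) * G)"
  proof -
    define dY where "dY = fls_deriv Y"
    have "2 * Y * (fls_deriv (fps_to_fls G) + dY / (2 * Y) * fps_to_fls G)
        = 2 * Y * fls_deriv (fps_to_fls G) + dY * fps_to_fls G"
      using Ynz by (simp add: field_simps)
    also have "\<dots> = fps_to_fls (fps_const 2 * (fps_X * U) * fps_deriv G) + fps_to_fls (fps_deriv (fps_X * U) * G)"
      unfolding dY_def Y_def fls_deriv_fps_to_fls unfolding fls_times_fps_to_fls by (simp del: fps_deriv_mult fls_deriv_mult)
    finally show ?thesis unfolding dY_def .
  qed
  ultimately have "fps_to_fls (fps_const 2 * (fps_X * U) * fps_deriv G + fps_deriv (fps_X * U) * G) = fps_to_fls P1"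
    using eq unfolding h x_def fps_to_fls_plus by simp
  then have E1: "fps_const 2 * (fps_X * U) * fps_deriv G + fps_deriv (fps_X * U) * G = P1"
    by (simp only: fps_to_fls_eq_iff)
  define u where "u = U $ 0"
  have nvu: "nv u = 1" using UU0[OF i] by (simp add: u_def U_def)
  have unz: "u \<noteq> 0" using nvu by auto
  have "integ (fps_const (inverse u) * U)"
    using UU_integ[OF i] nvu by (intro integ_mult integ_const) (auto simp: nv_inverse U_def)
  moreover have "(fps_const (inverse u) * U) $ 0 = 1" using unz by (simp add: u_def)
  ultimately obtain V where V: "integ V" "V $ 0 = 1" "V * V = fps_const (inverse u) * U"
    using sqrt_integ by blast
  have UV: "U = fps_const u * (V * V)"
    using V(3) unz by (simp add: fps_const_mult_apply_left[symmetric] mult.assoc[symmetric] flip: fps_const_mult)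
  define F where "F = V * G"
  have two: "fps_const (2::'a) = 2" by (rule fps_numeral_fps_const[symmetric])
  define Rr where "Rr = fps_const 2 * (fps_X * fps_deriv F) + F"
  have "fps_const u * (V * Rr) = P1"
  proof -
    have d1: "fps_deriv (V * G) = fps_deriv V * G + V * fps_deriv G" by simp
    have d2: "fps_deriv (fps_X * (fps_const u * (V * V))) =
        fps_const u * (V * V) + fps_X * (fps_const u * (fps_deriv V * V + V * fps_deriv V))"
      by (simp add: algebra_simps)
    show ?thesis unfolding E1[symmetric] UV Rr_def F_def two d1 d2 by algebra
  qed
  then have VR0: "fps_const (inverse u) * (fps_const u * (V * Rr)) = fps_const (inverse u) * P1" by simp
  have c1: "fps_const (inverse u) * fps_const u = (1 :: 'a fps)" using unz by simp
  have VR: "V * Rr = fps_const (inverse u) * P1"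
    using VR0 unfolding mult.assoc[symmetric] c1 by simp
  have bR: "bnd Rr" using bnd_div[OF V(1,2) VR] bnd_const_mult[OF bP1] by blast
  show ?thesis
  proof (rule core_conv[OF V(1,2) F_def])
    show "(\<lambda>k. 2 * int k + 1) k \<noteq> 0" for k by simp
    show "\<bar>(\<lambda>k. 2 * int k + 1) k\<bar> \<le> 2 * int k + int 1" for k by simp
    show "of_int ((\<lambda>k. 2 * int k + 1) k) * F $ k = Rr $ k" for k
      by (cases k) (simp_all add: Rr_def algebra_simps)
    show "bnd Rr" by (rule bR)
  qed
qed

end

lemma XpXinvp: "(fls_X :: 'a::field fls) ^ m * fls_X_inv ^ m = 1"
  by (simp add: power_mult_distrib[symmetric] X_Xinv)

lemma XpXinvp': "(fls_X :: 'a::field fls) ^ (Suc m) * fls_X_inv ^ m = fls_X"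
proof -
  have "(fls_X :: 'a fls) ^ (Suc m) * fls_X_inv ^ m = fls_X * (fls_X ^ m * fls_X_inv ^ m)"
    by (simp add: algebra_simps)
  then show ?thesis by (simp add: XpXinvp)
qed

context pwl
begin

definition rr :: "nat \<Rightarrow> 'a fps" where "rr j = 1 - fps_const (lam j) * fps_X"
definition RR :: "'a fps" where "RR = (\<Prod>j<n. rr j)"

lemma rr_integ: "j < n \<Longrightarrow> integ (rr j)"
  unfolding rr_def by (intro integ_diff integ_one integ_mult integ_const integ_X lam_int)

lemma rr0: "rr j $ 0 = 1" by (simp add: rr_def)

lemma ev_inf_lin: "ev (xpt lam None) [:-lam j, 1:] = fls_X_inv * fps_to_fls (rr j)"
proof -
  have "fls_X_inv * fps_to_fls (rr j) = fls_X_inv - fls_const (lam j) * (fls_X_inv * fls_X)"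
    by (simp add: rr_def fls_times_fps_to_fls algebra_simps)
  then show ?thesis by (simp add: ev_lin xpt_def Xinv_X)
qed

lemma rr_nz: "rr j \<noteq> 0" using rr0[of j] by auto

lemma ev_inf_nz: "ev (xpt lam None) [:-lam j, 1:] \<noteq> 0"
  by (simp add: ev_inf_lin rr_nz)

lemma RR_integ: "integ RR" unfolding RR_def by (intro integ_prod rr_integ) auto

lemma RR0: "RR $ 0 = 1" unfolding RR_def fps_prod_nth0 by (simp add: rr0)

lemma Yq_inf: "ev (xpt lam None) (Qpoly n lam) = fls_X_inv ^ n * fps_to_fls RR"
  by (simp add: Qev ev_inf_lin prod.distrib RR_def fps_to_fls_prod)

lemma XYq_inf: "fls_X ^ n * ev (xpt lam None) (Qpoly n lam) = fps_to_fls RR"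
  unfolding Yq_inf mult.assoc[symmetric] XpXinvp by simp

lemma XdYq_inf:
  "fls_X ^ n * dt None (ev (xpt lam None) (Qpoly n lam))
     = fps_to_fls (fps_X * (of_nat n * RR - fps_X * fps_deriv RR))"
proof -
  have h: "dt None (ev (xpt lam None) (Qpoly n lam))
      = - (fls_X\<^sup>2 * (- of_nat n * fls_X_inv ^ Suc n * fps_to_fls RR + fls_X_inv ^ n * fps_to_fls (fps_deriv RR)))"
    unfolding Yq_inf dt_def by (simp add: fls_deriv_X_inv_power fls_deriv_fps_to_fls)
  have "fls_X ^ n * dt None (ev (xpt lam None) (Qpoly n lam))
      = of_nat n * (fls_X ^ Suc (Suc n) * fls_X_inv ^ Suc n) * fps_to_fls RR
        - fls_X * (fls_X ^ Suc n * fls_X_inv ^ n) * fps_to_fls (fps_deriv RR)"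
    unfolding h by (simp add: algebra_simps power2_eq_square)
  also have "\<dots> = of_nat n * fls_X * fps_to_fls RR - fls_X * fls_X * fps_to_fls (fps_deriv RR)"
    by (simp only: XpXinvp')
  also have "\<dots> = fps_to_fls (fps_X * (of_nat n * RR - fps_X * fps_deriv RR))"
    by (simp add: fls_times_fps_to_fls algebra_simps)
  finally show ?thesis .
qed


lemma Yinf_nz: "ev (xpt lam None) (Qpoly n lam) \<noteq> 0"
  unfolding Yq_inf using RR0 by auto

lemma subdeg_RR: "subdegree RR = 0" using RR0 by (simp add: subdegree_eq_0_iff)

lemma inf_prpart:
  assumes G0: "G $ 0 = 0"
  defines "E \<equiv> phi_rat lam None (pderiv (Qpoly n lam)) (2 * Qpoly n lam) * fps_to_fls G"
  shows "fls_prpart E = 0 \<and> E $$ 0 = 0"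
proof -
  define Y where "Y = ev (xpt lam None) (Qpoly n lam)"
  define W where "W = of_nat n * RR - fps_X * fps_deriv RR"
  have Ynz: "Y \<noteq> 0" using Yinf_nz by (simp add: Y_def)
  have h: "phi_rat lam None (pderiv (Qpoly n lam)) (2 * Qpoly n lam) = dt None Y / (2 * Y)"
    using phi_rat_ev[of lam None "Qpoly n lam"] by (simp add: Y_def)
  have key: "(2 * Y) * E = dt None Y * fps_to_fls G"
    unfolding E_def h using Ynz by (simp add: field_simps)
  have "fls_X ^ n * ((2 * Y) * E) = 2 * (fls_X ^ n * Y) * E" by (simp add: algebra_simps)
  moreover have "fls_X ^ n * (dt None Y * fps_to_fls G) = (fls_X ^ n * dt None Y) * fps_to_fls G"
    by (simp add: algebra_simps)
  ultimately have key2: "2 * fps_to_fls RR * E = fps_to_fls (fps_X * W) * fps_to_fls G"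
    using key unfolding Y_def XYq_inf XdYq_inf W_def by simp
  have "fls_subdegree E \<ge> 2" if Enz: "E \<noteq> 0"
  proof -
    have RRnz: "RR \<noteq> 0" using RR0 by auto
    have lhs: "fls_subdegree (2 * fps_to_fls RR * E) = fls_subdegree E"
      using Enz RRnz by (simp add: fls_subdegree_fls_to_fps subdeg_RR)
    have nz: "fps_X * W \<noteq> 0" "G \<noteq> 0" using key2 Enz RRnz by auto
    have "subdegree (fps_X * W) \<noteq> 0" using nz(1) by (simp add: subdegree_eq_0_iff)
    then have s1: "subdegree (fps_X * W) \<ge> 1" by simp
    have "subdegree G \<noteq> 0" using nz(2) G0 by (simp add: subdegree_eq_0_iff)
    then have s2: "subdegree G \<ge> 1" by simp
    have "fls_subdegree (fps_to_fls (fps_X * W) * fps_to_fls G) = int (subdegree (fps_X * W)) + int (subdegree G)"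
      using nz by (simp add: fls_subdegree_fls_to_fps)
    then show ?thesis using lhs key2 s1 s2 by simp
  qed
  then show ?thesis
    by (cases "E = 0") (auto simp: fls_prpart_eq0_iff)
qed

lemma inf_conv:
  assumes odd: "odd n"
    and eq: "dt None (fps_to_fls G)
        + phi_rat lam None (pderiv (Qpoly n lam)) (2 * Qpoly n lam) * fps_to_fls G
        = (\<Sum>j<n. fls_const (a j) * inverse (ev (xpt lam None) [:-lam j, 1:]))"
  shows "conv_open_disc nv G"
proof -
  define Y where "Y = ev (xpt lam None) (Qpoly n lam)"
  define W where "W = of_nat n * RR - fps_X * fps_deriv RR"
  have Ynz: "Y \<noteq> 0" using Yinf_nz by (simp add: Y_def)
  have h: "phi_rat lam None (pderiv (Qpoly n lam)) (2 * Qpoly n lam) = dt None Y / (2 * Y)"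
    using phi_rat_ev[of lam None "Qpoly n lam"] by (simp add: Y_def)
  define P1 where "P1 = (\<Sum>j<n. fps_const (2 * a j) * (\<Prod>l\<in>{..<n}-{j}. rr l))"
  have bP1: "bnd P1" unfolding P1_def
    by (intro bnd_sum bnd_const_mult bnd_integ integ_prod rr_integ) auto
  obtain m where nm: "n = Suc m" using odd by (cases n) auto
  have R: "fls_X ^ n * (2 * Y * (\<Sum>j<n. fls_const (a j) * inverse (ev (xpt lam None) [:-lam j, 1:])))
      = fps_to_fls (fps_X * P1)"
  proof -
    have "2 * Y * (\<Sum>j<n. fls_const (a j) * inverse (ev (xpt lam None) [:-lam j, 1:]))
        = (\<Sum>j<n. fls_const (2 * a j) * (\<Prod>l\<in>{..<n}-{j}. ev (xpt lam None) [:-lam l, 1:]))"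
      unfolding Y_def by (rule Yq_RHS) (rule ev_inf_nz)
    also have "\<dots> = (\<Sum>j<n. fls_const (2 * a j) * (fls_X_inv ^ m * fps_to_fls (\<Prod>l\<in>{..<n}-{j}. rr l)))"
      by (intro sum.cong refl) (simp add: ev_inf_lin prod.distrib fps_to_fls_prod nm)
    finally have e: "2 * Y * (\<Sum>j<n. fls_const (a j) * inverse (ev (xpt lam None) [:-lam j, 1:]))
        = fls_X_inv ^ m * (\<Sum>j<n. fls_const (2 * a j) * fps_to_fls (\<Prod>l\<in>{..<n}-{j}. rr l))"
      by (simp add: sum_distrib_left algebra_simps)
    have "(fls_X :: 'a fls) ^ n * fls_X_inv ^ m = fls_X" unfolding nm by (simp add: mult.assoc XpXinvp)
    then show ?thesis unfolding e mult.assoc[symmetric]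
      by (simp add: P1_def fls_times_fps_to_fls fps_to_fls_sum sum_distrib_left)
  qed
  have L: "fls_X ^ n * (2 * Y * (dt None (fps_to_fls G) + dt None Y / (2 * Y) * fps_to_fls G))
      = fps_to_fls (fps_X * (W * G - fps_const 2 * (fps_X * (RR * fps_deriv G))))"
  proof -
    have "fls_X ^ n * (2 * Y * (dt None (fps_to_fls G) + dt None Y / (2 * Y) * fps_to_fls G))
        = 2 * (fls_X ^ n * Y) * dt None (fps_to_fls G) + (fls_X ^ n * dt None Y) * fps_to_fls G"
      using Ynz by (simp add: field_simps)
    also have "\<dots> = 2 * fps_to_fls RR * (- (fls_X\<^sup>2 * fps_to_fls (fps_deriv G)))
        + fps_to_fls (fps_X * W) * fps_to_fls G"
      unfolding Y_def XYq_inf XdYq_inf W_def by (simp add: dt_def fls_deriv_fps_to_fls)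
    also have "\<dots> = fps_to_fls (fps_X * (W * G - fps_const 2 * (fps_X * (RR * fps_deriv G))))"
      by (simp add: fls_times_fps_to_fls algebra_simps power2_eq_square)
    finally show ?thesis .
  qed
  have "fps_to_fls (fps_X * (W * G - fps_const 2 * (fps_X * (RR * fps_deriv G)))) = fps_to_fls (fps_X * P1)"
    using eq L R unfolding h by simp
  then have S: "W * G - fps_const 2 * (fps_X * (RR * fps_deriv G)) = P1"
    by (simp only: fps_to_fls_eq_iff mult_cancel_left fps_X_neq_zero simp_thms)
  obtain V where V: "integ V" "V $ 0 = 1" "V * V = RR" using sqrt_integ[OF RR_integ RR0] by blast
  define F where "F = V * G"
  define Rr where "Rr = of_nat n * F - fps_const 2 * (fps_X * fps_deriv F)"
  have VR: "V * Rr = P1"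
  proof -
    have d1: "fps_deriv (V * G) = fps_deriv V * G + V * fps_deriv G" by simp
    have d2: "fps_deriv (V * V) = fps_deriv V * V + V * fps_deriv V" by simp
    have two: "fps_const (2::'a) = 2" by (rule fps_numeral_fps_const[symmetric])
    show ?thesis unfolding S[symmetric] W_def V(3)[symmetric] Rr_def F_def d1 d2 two by algebra
  qed
  have bR: "bnd Rr" using bnd_div[OF V(1,2) VR bP1] .
  show ?thesis
  proof (rule core_conv[OF V(1,2) F_def])
    show "(\<lambda>k. int n - 2 * int k) k \<noteq> 0" for k using odd by presburger
    show "\<bar>(\<lambda>k. int n - 2 * int k) k\<bar> \<le> 2 * int k + int n" for k by simp
    show "of_int ((\<lambda>k. int n - 2 * int k) k) * F $ k = Rr $ k" for k
      by (cases k) (simp_all add: Rr_def fps_of_nat algebra_simps)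
    show "bnd Rr" by (rule bR)
  qed
qed

end

lemma const_fps_conv:
  fixes nv :: "'a::field_char_0 \<Rightarrow> real"
  assumes pw: "pw p nv" and d: "fps_deriv G = 0"
  shows "conv_open_disc nv G"
proof -
  interpret pw p nv by (rule pw)
  have "G $ Suc k = 0" for k
    using arg_cong[OF d, of "\<lambda>f. f $ k"] by (simp del: of_nat_Suc)
  then have b: "nv (G $ k) \<le> nv (G $ 0) * (2 * real k + real 1)" for k
    by (cases k) (auto simp: nv_nonneg)
  show ?thesis by (rule conv_from_bound[OF b])
qed

lemma dt_zero_deriv:
  assumes "dt la (fps_to_fls G) = (0 :: 'a::field fls)"
  shows "fps_deriv G = 0"
proof (cases la)
  case None
  then have "fls_X\<^sup>2 * fls_deriv (fps_to_fls G) = 0" using assms by (simp add: dt_def)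
  then have "fls_deriv (fps_to_fls G) = 0" by simp
  then show ?thesis by (simp add: fls_deriv_fps_to_fls)
next
  case (Some i)
  then show ?thesis using assms by (simp add: dt_def fls_deriv_fps_to_fls)
qed

theorem mainTheorem5:
  fixes p :: nat and nv :: "'a::field_char_0 \<Rightarrow> real" and g :: nat
    and lam :: "nat \<Rightarrow> 'a" and G0 G1 :: "nat option \<Rightarrow> 'a fps"
  assumes K: "padic_Witt_field p nv"
    and g: "g \<ge> 1"
    and lam_int: "\<And>i. i < 2*g+1 \<Longrightarrow> nv (lam i) \<le> 1"
    and lam_dist: "\<And>i j. i < 2*g+1 \<Longrightarrow> j < 2*g+1 \<Longrightarrow> i \<noteq> j \<Longrightarrow> \<not> nv (lam i - lam j) < 1"
    and inf0: "fps_nth (G0 None) 0 = 0"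
    and inf1: "fps_nth (G1 None) 0 = 0"
    and eq0: "\<And>la. la \<in> pts (2*g+1) \<Longrightarrow> dt la (fps_to_fls (G0 la)) = 0"
    and eq1: "\<And>la. la \<in> pts (2*g+1) \<Longrightarrow>
        dt la (fps_to_fls (G1 la))
          + phi_rat lam la (pderiv (Qpoly (2*g+1) lam)) (2 * Qpoly (2*g+1) lam) * fps_to_fls (G1 la)
        = (\<Sum>la'\<in>pts (2*g+1).
             Pr_at lam la' (phi_rat lam la' (pderiv (Qpoly (2*g+1) lam)) (2 * Qpoly (2*g+1) lam)
                            * fps_to_fls (G1 la')) la)"
  shows "in_Mc (2*g+1) nv G0 G1 \<and> in_H (2*g+1) nv lam G0 G1"
proof -
  define n where "n = 2*g+1"
  have pwi: "pw p nv" using K by (simp add: pw_def)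
  interpret pwl p nv n lam
    by (unfold_locales) (use K lam_int lam_dist in \<open>auto simp: n_def pw_def\<close>)
  have odd: "odd n" by (simp add: n_def)
  define F where "F la' = phi_rat lam la' (pderiv (Qpoly n lam)) (2 * Qpoly n lam) * fps_to_fls (G1 la')" for la'
  have FN: "fls_prpart (F None) = 0" "F None $$ 0 = 0"
    using inf_prpart[OF inf1] by (simp_all add: F_def)
  have FS: "F (Some j) $$ (- int k) = 0" if "j < n" "k \<ge> 2" for j k
    using fin_prpart[OF that] by (simp add: F_def)
  have RHS: "(\<Sum>la'\<in>pts n. Pr_at lam la' (F la') mu)
       = (\<Sum>j<n. fls_const (F (Some j) $$ -1) * inverse (ev (xpt lam mu) [:-lam j, 1:]))" for mu
    by (rule RHS_form[OF FN FS])
  have c0: "conv_open_disc nv (G0 la)" if "la \<in> pts n" for la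
    using const_fps_conv[OF pwi dt_zero_deriv[OF eq0]] that by (simp add: n_def)
  have c1: "conv_open_disc nv (G1 la)" if la: "la \<in> pts n" for la
  proof (cases la)
    case None
    have "dt None (fps_to_fls (G1 None))
        + phi_rat lam None (pderiv (Qpoly n lam)) (2 * Qpoly n lam) * fps_to_fls (G1 None)
        = (\<Sum>j<n. fls_const (F (Some j) $$ -1) * inverse (ev (xpt lam None) [:-lam j, 1:]))"
      using eq1[of None] RHS[of None] by (simp add: n_def F_def pts_def)
    then have "conv_open_disc nv (G1 None)"
      by (intro inf_conv[OF odd, where a = "\<lambda>j. F (Some j) $$ -1"]) simp
    then show ?thesis using None by simp
  next
    case (Some i)
    then have i: "i < n" using la by (auto simp: pts_def)
    have "fls_deriv (fps_to_fls (G1 (Some i)))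
        + phi_rat lam (Some i) (pderiv (Qpoly n lam)) (2 * Qpoly n lam) * fps_to_fls (G1 (Some i))
        = (\<Sum>j<n. fls_const (F (Some j) $$ -1) * inverse (ev (xpt lam (Some i)) [:-lam j, 1:]))"
      using eq1[of "Some i"] RHS[of "Some i"] i by (simp add: n_def F_def pts_def dt_def)
    then have "conv_open_disc nv (G1 (Some i))"
      by (intro fin_conv[OF i, where a = "\<lambda>j. F (Some j) $$ -1"]) simp
    then show ?thesis using Some by simp
  qed
  have Mc: "in_Mc n nv G0 G1"
    unfolding in_Mc_def in_Bc_def using c0 c1 inf0 inf1 by auto
  have H: "in_H n nv lam G0 G1"
    unfolding in_H_def
  proof (intro conjI ballI Mc)
    fix mu assume mu: "mu \<in> pts n"
    show "dt mu (fps_to_fls (G0 mu)) = 0" using eq0 mu by (simp add: n_def)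
    show "dt mu (fps_to_fls (G1 mu)) + rat_act n lam (pderiv (Qpoly n lam)) (2 * Qpoly n lam) G1 mu = 0"
      using eq1[of mu] mu unfolding rat_act_def by (simp add: n_def algebra_simps)
  qed
  show ?thesis using Mc H by (simp add: n_def)
qed


end
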